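(* Let $q$ be an odd prime power, $f$ a planar function on $\mathbb F_{q^2}$, and $\kappa:\mathbb F_{q^2}\to\mathbb F_{q^2}$, $x\mapsto\bar x$, an additive map such that (a) $\kappa(\kappa(x))=x$ for all $x$; (b) $\overline{f(x)}=f(\bar x)$ for all $x$; (c) $\#\{y\in\mathbb F_{q^2}:y+\bar y=f(x+\bar x)\}=q$ for each $x\in\mathbb F_{q^2}$. Let $\rho$ map the points of $\Pi(f)$ to lines by $(x,y)\mapsto L_{\bar x,\bar y}$, $(a)\mapsto N_{\bar a}$ for $a\in\mathbb F_{q^2}$, $(\infty)\mapsto L_\infty$. Then $\rho$ is a bijection from points to lines, and together with the map sending each line $\rho(P)$ to $P$ it is a unitary polarity of $\Pi(f)$, whose set of absolute points is the unital \[\mathcal U:=\{(x,y)\in\mathbb F_{q^2}^2:y+\bar y=f(x+\bar x)\}\cup\{(\infty)\}.\]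
   Context: A function $f:\mathbb F_{q^2}\to\mathbb F_{q^2}$ is planar if for every $a\neq0$ the map $x\mapsto f(x+a)-f(x)$ is a bijection. For planar $f$, $\Pi(f)$ is the projective plane (of order $q^2$) with points $(x,y)\in\mathbb F_{q^2}^2$ and $(a)$ for $a\in\mathbb F_{q^2}\cup\{\infty\}$, lines $L_{a,b}=\{(x,f(x+a)-b):x\in\mathbb F_{q^2}\}\cup\{(a)\}$, $N_a=\{(a,y):y\in\mathbb F_{q^2}\}\cup\{(\infty)\}$ ($a,b\in\mathbb F_{q^2}$), $L_\infty=\{(a):a\in\mathbb F_{q^2}\cup\{\infty\}\}$. A polarity is a bijection of points onto lines and lines onto points, of order two, preserving incidence (P on $\ell$ iff $\rho(\ell)$ on $\rho(P)$). A point $P$ is absolute if $P\in\rho(P)$; a polarity of a plane of order $q^2$ is unitary if it has exactly $q^3+1$ absolute points. A unital is a set of $q^3+1$ points meeting every line in $1$ or $q+1$ points. *)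

theory Defs
  imports Main "HOL-Computational_Algebra.Primes"
begin

datatype 'a point = Aff 'a 'a | InfPt 'a | InfInf
datatype 'a line = L 'a 'a | N 'a | Linf

definition planar :: "('a::field \<Rightarrow> 'a) \<Rightarrow> bool" where
  "planar f \<longleftrightarrow> (\<forall>a. a \<noteq> 0 \<longrightarrow> bij (\<lambda>x. f (x + a) - f x))"

fun inc :: "('a::field \<Rightarrow> 'a) \<Rightarrow> 'a point \<Rightarrow> 'a line \<Rightarrow> bool" where
  "inc f (Aff x y) (L a b) \<longleftrightarrow> y = f (x + a) - b"
| "inc f (InfPt c) (L a b) \<longleftrightarrow> c = a"
| "inc f InfInf (L a b) \<longleftrightarrow> False"
| "inc f (Aff x y) (N a) \<longleftrightarrow> x = a"
| "inc f (InfPt c) (N a) \<longleftrightarrow> False"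
| "inc f InfInf (N a) \<longleftrightarrow> True"
| "inc f (Aff x y) Linf \<longleftrightarrow> False"
| "inc f (InfPt c) Linf \<longleftrightarrow> True"
| "inc f InfInf Linf \<longleftrightarrow> True"

fun rho :: "('a \<Rightarrow> 'a) \<Rightarrow> 'a point \<Rightarrow> 'a line" where
  "rho k (Aff x y) = L (k x) (k y)"
| "rho k (InfPt a) = N (k a)"
| "rho k InfInf = Linf"

definition polarity :: "('a::field \<Rightarrow> 'a) \<Rightarrow> ('a point \<Rightarrow> 'a line) \<Rightarrow> ('a line \<Rightarrow> 'a point) \<Rightarrow> bool" where
  "polarity f \<sigma> \<tau> \<longleftrightarrow> bij \<sigma> \<and> bij \<tau> \<and> (\<forall>P. \<tau> (\<sigma> P) = P) \<and> (\<forall>l. \<sigma> (\<tau> l) = l)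
     \<and> (\<forall>P l. inc f P l \<longleftrightarrow> inc f (\<tau> l) (\<sigma> P))"

definition absolute_points :: "('a::field \<Rightarrow> 'a) \<Rightarrow> ('a point \<Rightarrow> 'a line) \<Rightarrow> 'a point set" where
  "absolute_points f \<sigma> = {P. inc f P (\<sigma> P)}"

definition unitary_polarity :: "nat \<Rightarrow> ('a::field \<Rightarrow> 'a) \<Rightarrow> ('a point \<Rightarrow> 'a line) \<Rightarrow> ('a line \<Rightarrow> 'a point) \<Rightarrow> bool" where
  "unitary_polarity q f \<sigma> \<tau> \<longleftrightarrow> polarity f \<sigma> \<tau> \<and> card (absolute_points f \<sigma>) = q ^ 3 + 1"

definition unital :: "nat \<Rightarrow> ('a::field \<Rightarrow> 'a) \<Rightarrow> 'a point set \<Rightarrow> bool" where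
  "unital q f U \<longleftrightarrow> finite U \<and> card U = q ^ 3 + 1 \<and>
     (\<forall>l. card {P \<in> U. inc f P l} = 1 \<or> card {P \<in> U. inc f P l} = q + 1)"

definition prime_power :: "nat \<Rightarrow> bool" where
  "prime_power q \<longleftrightarrow> (\<exists>p k. prime p \<and> k > 0 \<and> q = p ^ k)"

end

theory Submission imports Defs begin

lemma card_ind: "int (card {x::'b::finite. P x}) = (\<Sum>x\<in>UNIV. if P x then 1 else 0)"
  by (simp add: sum.If_cases)

locale L41 =
  fixes q :: nat and f :: "'a::{field,finite} \<Rightarrow> 'a" and k :: "'a \<Rightarrow> 'a"
  assumes cardU: "card (UNIV::'a set) = q^2"
  and pl: "planar f"
  and add: "\<And>x y. k (x+y) = k x + k y"
  and inv2: "\<And>x. k (k x) = x"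
  and kf: "\<And>x. k (f x) = f (k x)"
  and cq: "\<And>x. card {y. y + k y = f (x + k x)} = q"
begin

lemma k0: "k 0 = 0" using add[of 0 0] by (metis add_cancel_left_right)
lemma kminus: "k (-x) = - k x" using add[of x "-x"] k0 by (metis add.right_inverse add_eq_0_iff)
lemma kdiff: "k (x - y) = k x - k y" using add[of x "-y"] kminus by simp
lemma kinj: "k x = k y \<longleftrightarrow> x = y" by (metis inv2)

definition Ua :: "('a \<times> 'a) set" where "Ua = {(x,y). y + k y = f (x + k x)}"
definition I :: "'a \<Rightarrow> 'a \<Rightarrow> 'a set" where "I a b = {x. (x, f (x+a) - b) \<in> Ua}"
definition chi :: "'a \<Rightarrow> 'a \<Rightarrow> 'a \<Rightarrow> int" where "chi a b x = (if (x, f(x+a)-b) \<in> Ua then 1 else 0)"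

lemma fiber: "(\<Sum>y\<in>UNIV. if (x,y) \<in> Ua then 1 else 0 :: int) = int q"
  using card_ind[of "\<lambda>y. (x,y)\<in>Ua"] cq[of x] by (simp add: Ua_def)

lemma cardI: "int (card (I a b)) = (\<Sum>x\<in>UNIV. chi a b x)"
  unfolding I_def chi_def by (rule card_ind)

lemma sum_b: "(\<Sum>b\<in>UNIV. chi a b x) = int q"
proof -
  have "(\<Sum>b\<in>UNIV. chi a b x) = (\<Sum>y\<in>UNIV. if (x,y) \<in> Ua then 1 else 0 :: int)"
    by (rule sum.reindex_bij_witness[where j="\<lambda>b. f(x+a)-b" and i="\<lambda>y. f(x+a)-y"])
       (auto simp: chi_def)
  then show ?thesis using fiber by simp
qed

lemma sum_ab: "(\<Sum>a\<in>UNIV. \<Sum>b\<in>UNIV. chi a b x) = int q ^ 3"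
  by (simp add: sum_b cardU power3_eq_cube power2_eq_square)

lemma h_bij: "d \<noteq> 0 \<Longrightarrow> bij (\<lambda>z. f (z + d) - f z)"
  using pl unfolding planar_def by blast

lemma pair_count:
  assumes "x \<noteq> x'"
  shows "(\<Sum>a\<in>UNIV. \<Sum>b\<in>UNIV. chi a b x * chi a b x') = int q ^ 2"
proof -
  define d where "d = x' - x"
  have d0: "d \<noteq> 0" using assms by (simp add: d_def)
  define h where "h = (\<lambda>z. f (z + d) - f z)"
  have hb: "bij h" using h_bij[OF d0] by (simp add: h_def)
  define hi where "hi = inv h"
  have hhi: "h (hi w) = w" for w using hb by (simp add: hi_def bij_is_surj surj_f_inv_f)
  have hih: "hi (h w) = w" for w using hb by (simp add: hi_def bij_is_inj inv_f_f)
  have xd: "x' + c = (x + c) + d" for c by (simp add: d_def)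
  have "(\<Sum>a\<in>UNIV. \<Sum>b\<in>UNIV. chi a b x * chi a b x') =
        (\<Sum>(a,b)\<in>UNIV\<times>UNIV. chi a b x * chi a b x')"
    by (rule sum.cartesian_product)
  also have "\<dots> = (\<Sum>(y,y')\<in>UNIV\<times>UNIV. (if (x,y) \<in> Ua then 1 else 0 :: int) * (if (x',y') \<in> Ua then 1 else 0))"
  proof (rule sum.reindex_bij_witness[where j="\<lambda>(a,b). (f(x+a)-b, f(x'+a)-b)"
        and i="\<lambda>(y,y'). (hi (y'-y) - x, f (hi (y'-y)) - y)"])
    fix p :: "'a \<times> 'a" assume "p \<in> UNIV \<times> UNIV"
    obtain a b where p: "p = (a,b)" by fastforce
    have "h (x + a) = f (x' + a) - b - (f (x + a) - b)" unfolding h_def xd by simp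
    then have "hi (f (x' + a) - b - (f (x + a) - b)) = x + a" using hih by metis
    then show "(\<lambda>(y,y'). (hi (y'-y) - x, f (hi (y'-y)) - y)) ((\<lambda>(a,b). (f(x+a)-b, f(x'+a)-b)) p) = p"
      using p by simp
  next
    fix p :: "'a \<times> 'a" assume "p \<in> UNIV \<times> UNIV"
    obtain y y' where p: "p = (y,y')" by fastforce
    have e: "f (hi (y'-y) + d) - f (hi (y'-y)) = y' - y" using hhi[of "y'-y"] by (simp add: h_def)
    have e2: "x' + (hi (y'-y) - x) = hi (y'-y) + d" by (simp add: d_def)
    show "(\<lambda>(a,b). (f(x+a)-b, f(x'+a)-b)) ((\<lambda>(y,y'). (hi (y'-y) - x, f (hi (y'-y)) - y)) p) = p"
      using p e e2 by (simp add: algebra_simps)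
  qed (auto simp: chi_def)
  also have "\<dots> = (\<Sum>y\<in>UNIV. \<Sum>y'\<in>UNIV. (if (x,y) \<in> Ua then 1 else 0 :: int) * (if (x',y') \<in> Ua then 1 else 0))"
    by (rule sum.cartesian_product[symmetric])
  also have "\<dots> = (\<Sum>y\<in>UNIV. (if (x,y) \<in> Ua then 1 else 0 :: int)) * (\<Sum>y'\<in>UNIV. (if (x',y') \<in> Ua then 1 else 0))"
    by (rule sum_product[symmetric])
  also have "\<dots> = int q ^ 2" by (simp add: fiber power2_eq_square)
  finally show ?thesis .
qed

definition ii :: "'a \<Rightarrow> 'a \<Rightarrow> int" where "ii a b = (\<Sum>x\<in>UNIV. chi a b x)"

lemma sum_i: "(\<Sum>(a,b)\<in>UNIV. ii a b) = int q ^ 5"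
proof -
  have "(\<Sum>(a,b)\<in>UNIV. ii a b) = (\<Sum>a\<in>UNIV. \<Sum>b\<in>UNIV. ii a b)"
    using sum.cartesian_product[of "\<lambda>a b. ii a b" UNIV UNIV] by simp
  also have "\<dots> = (\<Sum>a\<in>UNIV. \<Sum>x\<in>UNIV. \<Sum>b\<in>UNIV. chi a b x)"
    unfolding ii_def by (rule sum.cong[OF refl], rule sum.swap)
  also have "\<dots> = (\<Sum>x\<in>UNIV. \<Sum>a\<in>UNIV. \<Sum>b\<in>UNIV. chi a b x)"
    by (rule sum.swap)
  also have "\<dots> = int q ^ 5" by (simp add: sum_ab cardU)
  finally show ?thesis .
qed

lemma chi01: "chi a b x * chi a b x = chi a b x" by (simp add: chi_def)

lemma sum_i2: "(\<Sum>(a,b)\<in>UNIV. (ii a b)^2) = int q ^ 6 + int q ^ 5 - int q ^ 4"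
proof -
  define G where "G x x' = (if x = x' then int q ^ 3 else int q ^ 2)" for x x' :: 'a
  have G: "(\<Sum>a\<in>UNIV. \<Sum>b\<in>UNIV. chi a b x * chi a b x') = G x x'" for x x'
    using pair_count[of x x'] sum_ab[of x] by (auto simp: G_def chi01)
  have G2: "(\<Sum>x'\<in>UNIV. G x x') = int q ^ 4 + int q ^ 3 - int q ^ 2" for x
  proof -
    have "(\<Sum>x'\<in>UNIV. G x x') = (\<Sum>x'\<in>UNIV. int q ^ 2 + (if x' = x then int q ^ 3 - int q ^ 2 else 0))"
      by (rule sum.cong) (auto simp: G_def)
    also have "\<dots> = int q ^ 4 + int q ^ 3 - int q ^ 2"
      by (simp add: sum.distrib cardU)
    finally show ?thesis .
  qed
  have "(\<Sum>(a,b)\<in>UNIV. (ii a b)^2) = (\<Sum>a\<in>UNIV. \<Sum>b\<in>UNIV. (ii a b)^2)"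
    using sum.cartesian_product[of "\<lambda>a b. (ii a b)^2" UNIV UNIV] by simp
  also have "\<dots> = (\<Sum>a\<in>UNIV. \<Sum>b\<in>UNIV. \<Sum>x\<in>UNIV. \<Sum>x'\<in>UNIV. chi a b x * chi a b x')"
    unfolding ii_def power2_eq_square sum_product by simp
  also have "\<dots> = (\<Sum>a\<in>UNIV. \<Sum>x\<in>UNIV. \<Sum>b\<in>UNIV. \<Sum>x'\<in>UNIV. chi a b x * chi a b x')"
    by (rule sum.cong[OF refl], rule sum.swap)
  also have "\<dots> = (\<Sum>a\<in>UNIV. \<Sum>x\<in>UNIV. \<Sum>x'\<in>UNIV. \<Sum>b\<in>UNIV. chi a b x * chi a b x')"
    by (rule sum.cong[OF refl], rule sum.cong[OF refl], rule sum.swap)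
  also have "\<dots> = (\<Sum>x\<in>UNIV. \<Sum>a\<in>UNIV. \<Sum>x'\<in>UNIV. \<Sum>b\<in>UNIV. chi a b x * chi a b x')"
    by (rule sum.swap)
  also have "\<dots> = (\<Sum>x\<in>UNIV. \<Sum>x'\<in>UNIV. \<Sum>a\<in>UNIV. \<Sum>b\<in>UNIV. chi a b x * chi a b x')"
    by (rule sum.cong[OF refl], rule sum.swap)
  also have "\<dots> = (\<Sum>x\<in>UNIV. \<Sum>x'\<in>UNIV. G x x')" by (simp add: G)
  also have "\<dots> = int q ^ 6 + int q ^ 5 - int q ^ 4" by (simp add: G2 cardU algebra_simps)
  finally show ?thesis .
qed

lemma Ua_k: "(k a, k b) \<in> Ua \<longleftrightarrow> (a,b) \<in> Ua"
  by (simp add: Ua_def inv2 add.commute)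

lemma abs_line:
  assumes ab: "(a,b) \<in> Ua"
  shows "I a b = {k a}"
proof
  have e: "b + k b = f (a + k a)" using ab by (simp add: Ua_def)
  have "f (k a + a) - b = k b" using e by (simp add: add.commute algebra_simps)
  then show "{k a} \<subseteq> I a b" using Ua_k[of a b] ab by (simp add: I_def)
  show "I a b \<subseteq> {k a}"
  proof
    fix x assume "x \<in> I a b"
    define y where "y = f (x+a) - b"
    have xy: "y + k y = f (x + k x)" using \<open>x \<in> I a b\<close> by (simp add: I_def Ua_def y_def)
    have "x = k a"
    proof (rule ccontr)
      assume ne: "x \<noteq> k a"
      define d where "d = k a - x"
      have d0: "d \<noteq> 0" using ne by (simp add: d_def)
      have ky: "k y = f (k x + k a) - k b" unfolding y_def by (simp add: kdiff add kf)
      have h1: "f (x + a + d) - f (x + a) = k b - y"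
        using e by (simp add: d_def y_def algebra_simps)
      have fa: "f (k a + k x) = k b + k y" using ky by (simp add: add.commute)
      have xd: "x + k x + d = k a + k x" by (simp add: d_def)
      have h2: "f (x + k x + d) - f (x + k x) = k b - y"
        unfolding xd fa xy[symmetric] by simp
      have "inj (\<lambda>z. f (z + d) - f z)" using h_bij[OF d0] bij_is_inj by blast
      then have "x + a = x + k x" using h1 h2 unfolding inj_def by metis
      then have "a = k x" by simp
      then show False using ne inv2 by metis
    qed
    then show "x \<in> {k a}" by simp
  qed
qed

lemma card_Ua: "int (card Ua) = int q ^ 3"
proof -
  have "int (card Ua) = (\<Sum>p\<in>UNIV. if p \<in> Ua then 1 else 0)"
    using card_ind[of "\<lambda>p. p \<in> Ua"] by simp
  also have "\<dots> = (\<Sum>a\<in>UNIV. \<Sum>b\<in>UNIV. if (a,b) \<in> Ua then 1 else 0)"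
    by (simp add: sum.cartesian_product split_def)
  also have "\<dots> = int q ^ 3" by (simp add: fiber cardU power3_eq_cube power2_eq_square)
  finally show ?thesis .
qed

lemma cardUU: "card (UNIV :: ('a\<times>'a) set) = q ^ 4"
proof -
  have "card (UNIV :: ('a\<times>'a) set) = card (UNIV::'a set) * card (UNIV::'a set)"
    by (metis UNIV_Times_UNIV card_cartesian_product)
  then show ?thesis by (simp add: cardU power_add[symmetric])
qed

lemma nonabs:
  assumes "(a,b) \<notin> Ua"
  shows "ii a b = int q + 1"
proof -
  define J where "J p = ii (fst p) (snd p)" for p
  have S1: "(\<Sum>p\<in>UNIV. J p) = int q ^ 5" using sum_i by (simp add: J_def split_def)
  have S2: "(\<Sum>p\<in>UNIV. (J p)^2) = int q ^ 6 + int q ^ 5 - int q ^ 4" using sum_i2 by (simp add: J_def split_def)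
  have "(\<Sum>p\<in>UNIV. (J p - (int q + 1))^2) =
        (\<Sum>p\<in>UNIV. (J p)^2 - 2 * (int q + 1) * J p + (int q + 1)^2)"
    by (rule sum.cong) (auto simp: power2_eq_square algebra_simps)
  also have "\<dots> = (\<Sum>p\<in>UNIV. (J p)^2) - 2 * (int q + 1) * (\<Sum>p\<in>UNIV. J p) + int (card (UNIV::('a\<times>'a) set)) * (int q + 1)^2"
    by (simp add: sum.distrib sum_subtractf sum_distrib_left)
  also have "\<dots> = int q ^ 5" unfolding S1 S2 cardUU
    by (simp add: power2_eq_square power3_eq_cube algebra_simps power_numeral_reduce)
  finally have T: "(\<Sum>p\<in>UNIV. (J p - (int q + 1))^2) = int q ^ 5" .
  have JU: "J p = 1" if "p \<in> Ua" for p
  proof -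
    obtain a b where p: "p = (a,b)" by fastforce
    have "J p = int (card (I a b))" using cardI by (simp add: J_def ii_def p)
    then show ?thesis using abs_line[of a b] that p by simp
  qed
  have "(\<Sum>p\<in>UNIV. (J p - (int q + 1))^2) =
        (\<Sum>p\<in>UNIV. (if p \<in> Ua then (int q)^2 else 0)) + (\<Sum>p\<in>UNIV. (if p \<in> Ua then 0 else (J p - (int q + 1))^2))"
    by (subst sum.distrib[symmetric], rule sum.cong) (auto simp: JU)
  also have "(\<Sum>p\<in>UNIV. (if p \<in> Ua then (int q)^2 else 0)) = (int q)^2 * int (card Ua)"
    by (simp add: sum.If_cases)
  finally have "(\<Sum>p\<in>UNIV. (if p \<in> Ua then 0 else (J p - (int q + 1))^2)) = 0"
    using T card_Ua by (simp add: power_add[symmetric])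
  then have "\<forall>p\<in>UNIV. (if p \<in> Ua then 0 else (J p - (int q + 1))^2) = 0"
    by (subst sum_nonneg_eq_0_iff[symmetric]) auto
  then have "(if (a,b) \<in> Ua then 0 else (J (a,b) - (int q + 1))^2) = 0" by blast
  then have "(J (a,b) - (int q + 1))^2 = 0" using assms by simp
  then show ?thesis by (simp add: J_def)
qed

lemma inc_sym1: "inc f P (rho k R) \<Longrightarrow> inc f R (rho k P)"
proof (cases P; cases R)
  fix x y x' y' assume P: "P = Aff x y" and R: "R = Aff x' y'" and h: "inc f P (rho k R)"
  then have "y = f (x + k x') - k y'" by simp
  then have "k y = f (k x + x') - y'" by (simp add: kdiff add kf inv2)
  then show ?thesis using P R by (simp add: add.commute)
qed (auto simp: inv2)

lemma inc_sym: "inc f P (rho k R) \<longleftrightarrow> inc f R (rho k P)"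
  using inc_sym1 by blast

lemma rho_inj: "inj (rho k)"
proof (rule injI)
  fix P R assume "rho k P = rho k R" then show "P = R"
    by (cases P; cases R) (auto simp: kinj)
qed

lemma rho_surj: "surj (rho k)"
proof -
  have "l \<in> range (rho k)" for l
  proof (cases l)
    case (L a b) then have "l = rho k (Aff (k a) (k b))" by (simp add: inv2)
    then show ?thesis by blast
  next
    case (N a) then have "l = rho k (InfPt (k a))" by (simp add: inv2)
    then show ?thesis by blast
  next
    case Linf then have "l = rho k InfInf" by simp
    then show ?thesis by blast
  qed
  then show ?thesis by blast
qed

lemma rho_bij: "bij (rho k)" using rho_inj rho_surj by (simp add: bij_def)

lemma polar: "polarity f (rho k) (inv (rho k))"
  unfolding polarity_def
proof (intro conjI allI)
  show "bij (rho k)" by (rule rho_bij)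
  show "bij (inv (rho k))" using rho_bij by (rule bij_imp_bij_inv)
  show "inv (rho k) (rho k P) = P" for P using rho_inj by (rule inv_f_f)
  show "rho k (inv (rho k) l) = l" for l using rho_surj by (rule surj_f_inv_f)
  show "inc f P l = inc f (inv (rho k) l) (rho k P)" for P l
  proof -
    obtain R where l: "l = rho k R" using rho_surj by blast
    have "inv (rho k) l = R" unfolding l using rho_inj by (rule inv_f_f)
    then show ?thesis using inc_sym l by simp
  qed
qed

definition UU :: "'a point set" where
  "UU = {Aff x y | x y. y + k y = f (x + k x)} \<union> {InfInf}"

lemma abs_eq: "absolute_points f (rho k) = UU"
proof -
  have "inc f P (rho k P) \<longleftrightarrow> P \<in> UU" for P
    by (cases P) (auto simp: UU_def eq_diff_eq)
  then show ?thesis unfolding absolute_points_def by blast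
qed

lemma UU_img: "UU = insert InfInf ((\<lambda>(x,y). Aff x y) ` Ua)"
  by (auto simp: UU_def Ua_def)

lemma finite_UU: "finite UU" unfolding UU_img by simp

lemma card_UU: "card UU = q ^ 3 + 1"
proof -
  have "inj_on (\<lambda>(x,y). Aff x y) Ua" by (auto simp: inj_on_def)
  then have "card ((\<lambda>(x,y). Aff x y) ` Ua) = card Ua" by (rule card_image)
  moreover have "card Ua = q ^ 3" using card_Ua by (metis of_nat_eq_iff of_nat_power)
  ultimately show ?thesis unfolding UU_img by (subst card_insert_disjoint) auto
qed

lemma line_count: "card {P \<in> UU. inc f P l} = 1 \<or> card {P \<in> UU. inc f P l} = q + 1"
proof (cases l)
  case (L a b)
  have "{P \<in> UU. inc f P l} = (\<lambda>x. Aff x (f (x+a) - b)) ` I a b"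
    by (auto simp: L UU_def I_def Ua_def)
  moreover have "inj_on (\<lambda>x. Aff x (f (x+a) - b)) (I a b)" by (auto simp: inj_on_def)
  ultimately have c: "card {P \<in> UU. inc f P l} = card (I a b)" by (simp add: card_image)
  show ?thesis
  proof (cases "(a,b) \<in> Ua")
    case True then show ?thesis using c abs_line by simp
  next
    case False
    then have "int (card (I a b)) = int q + 1" using nonabs cardI by (simp add: ii_def)
    then show ?thesis using c by simp
  qed
next
  case (N a)
  have "{P \<in> UU. inc f P l} = insert InfInf ((\<lambda>y. Aff a y) ` {y. y + k y = f (a + k a)})"
    by (auto simp: N UU_def)
  moreover have "card ((\<lambda>y. Aff a y) ` {y. y + k y = f (a + k a)}) = q"
    using cq[of a] by (subst card_image) (auto simp: inj_on_def)
  moreover have "InfInf \<notin> (\<lambda>y. Aff a y) ` {y. y + k y = f (a + k a)}" by auto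
  ultimately show ?thesis by (simp add: card_insert_if)
next
  case Linf
  have "{P \<in> UU. inc f P l} = {InfInf}" by (auto simp: Linf UU_def)
  then show ?thesis by simp
qed

end

theorem lemma4p1:
  fixes q :: nat and f :: "'a::{field,finite} \<Rightarrow> 'a" and \<kappa> :: "'a \<Rightarrow> 'a"
  assumes "prime_power q" and "odd q"
    and "card (UNIV :: 'a set) = q ^ 2"
    and "planar f"
    and "\<And>x y. \<kappa> (x + y) = \<kappa> x + \<kappa> y"
    and "\<And>x. \<kappa> (\<kappa> x) = x"
    and "\<And>x. \<kappa> (f x) = f (\<kappa> x)"
    and "\<And>x. card {y. y + \<kappa> y = f (x + \<kappa> x)} = q"
  shows "bij (rho \<kappa>) \<and> unitary_polarity q f (rho \<kappa>) (inv (rho \<kappa>))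
    \<and> absolute_points f (rho \<kappa>) = {Aff x y | x y. y + \<kappa> y = f (x + \<kappa> x)} \<union> {InfInf}
    \<and> unital q f ({Aff x y | x y. y + \<kappa> y = f (x + \<kappa> x)} \<union> {InfInf})"
proof -
  interpret L41 q f \<kappa> using assms by unfold_locales auto
  show ?thesis
    using rho_bij polar abs_eq card_UU finite_UU line_count
    unfolding unitary_polarity_def unital_def UU_def by simp
qed

end
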